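(* Let $n\ge1$ and $P\ge1$ be integers, $a_0\in[0,2]$ and $a_1\in[0,P-1]$, and define $$\mathcal{C}'_{2,3,P}=\{\boldsymbol{x}\in\Sigma_2^n:\ \mathrm{VT}^{(0)}(\boldsymbol{x})\equiv a_0\pmod 3,\ \mathrm{VT}^{(1)}(\boldsymbol{x})\equiv a_1\pmod P\}.$$ Then for any two distinct $\boldsymbol{x},\boldsymbol{y}\in\mathcal{C}'_{2,3,P}$, if the difference between the largest and the smallest index at which they differ is less than $P$, then $d_H(\boldsymbol{x},\boldsymbol{y})\ge3$. Moreover, there exists a choice of $a_0,a_1$ such that $r(\mathcal{C}'_{2,3,P})\le\log_2P+\log_23$.
   Context: $\Sigma_2=\{0,1\}$. For $\boldsymbol{x}\in\Sigma_2^n$, $x[i]$ is its $i$-th entry and $\mathrm{VT}^{(k)}(\boldsymbol{x})=\sum_{i=1}^n i^kx[i]$. $d_H$ is Hamming distance. Redundancy: $r(\mathcal{C})=n-\log_2|\mathcal{C}|$. *)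

theory Defs
  imports Complex_Main "HOL-Library.FuncSet"
begin

definition binwords :: "nat \<Rightarrow> (nat \<Rightarrow> nat) set" where
  "binwords n = {1..n} \<rightarrow>\<^sub>E {0, 1}"

definition VT :: "nat \<Rightarrow> nat \<Rightarrow> (nat \<Rightarrow> nat) \<Rightarrow> nat" where
  "VT k n x = (\<Sum>i=1..n. i ^ k * x i)"

definition diffpos :: "nat \<Rightarrow> (nat \<Rightarrow> nat) \<Rightarrow> (nat \<Rightarrow> nat) \<Rightarrow> nat set" where
  "diffpos n x y = {i \<in> {1..n}. x i \<noteq> y i}"

definition hamming :: "nat \<Rightarrow> (nat \<Rightarrow> nat) \<Rightarrow> (nat \<Rightarrow> nat) \<Rightarrow> nat" where
  "hamming n x y = card (diffpos n x y)"

definition codeC :: "nat \<Rightarrow> nat \<Rightarrow> nat \<Rightarrow> nat \<Rightarrow> (nat \<Rightarrow> nat) set" where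
  "codeC n P a0 a1 = {x \<in> binwords n. VT 0 n x mod 3 = a0 mod 3 \<and> VT 1 n x mod P = a1 mod P}"

definition redundancy :: "nat \<Rightarrow> (nat \<Rightarrow> nat) set \<Rightarrow> real" where
  "redundancy n C = real n - log 2 (real (card C))"

end

theory Submission
  imports Defs
begin

lemma VT_diff:
  assumes "x \<in> binwords n" "y \<in> binwords n"
  shows "int (VT k n x) - int (VT k n y) = (\<Sum>i\<in>diffpos n x y. int (i^k) * (int (x i) - int (y i)))"
proof -
  have "int (VT k n x) - int (VT k n y) = (\<Sum>i\<in>{1..n}. int (i^k) * (int (x i) - int (y i)))"
    unfolding VT_def by (simp add: of_nat_sum sum_subtractf[symmetric] algebra_simps)
  also have "\<dots> = (\<Sum>i\<in>diffpos n x y. int (i^k) * (int (x i) - int (y i)))"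
    by (intro sum.mono_neutral_right) (auto simp: diffpos_def)
  finally show ?thesis .
qed

lemma bin_pm:
  assumes "x \<in> binwords n" "y \<in> binwords n" "i \<in> diffpos n x y"
  shows "int (x i) - int (y i) = 1 \<or> int (x i) - int (y i) = -1"
proof -
  have "i \<in> {1..n}" "x i \<noteq> y i" using assms(3) by (auto simp: diffpos_def)
  moreover have "x i \<in> {0,1}" "y i \<in> {0,1}" using assms(1,2) \<open>i \<in> {1..n}\<close>
    by (auto simp: binwords_def)
  ultimately show ?thesis by auto
qed

lemma part1:
  assumes x: "x \<in> codeC n P a0 a1" and y: "y \<in> codeC n P a0 a1" and ne: "x \<noteq> y"
    and md: "Max (diffpos n x y) - Min (diffpos n x y) < P"
  shows "hamming n x y \<ge> 3"
proof (rule ccontr)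
  assume "\<not> ?thesis"
  hence c: "card (diffpos n x y) < 3" by (simp add: hamming_def)
  have xb: "x \<in> binwords n" and yb: "y \<in> binwords n" using x y by (auto simp: codeC_def)
  define D where "D = diffpos n x y"
  have fin: "finite D" by (simp add: D_def diffpos_def)
  have "D \<noteq> {}"
  proof
    assume "D = {}"
    hence "\<forall>i\<in>{1..n}. x i = y i" by (auto simp: D_def diffpos_def)
    hence "x = y" using xb yb by (auto simp: binwords_def intro: PiE_ext)
    thus False using ne by simp
  qed
  hence "card D \<noteq> 0" using fin by simp
  have m3: "VT 0 n x mod 3 = VT 0 n y mod 3" and mP: "VT 1 n x mod P = VT 1 n y mod P"
    using x y by (auto simp: codeC_def)
  have d3: "(3::int) dvd int (VT 0 n x) - int (VT 0 n y)"
    apply (rule mod_eq_dvd_iff[THEN iffD1])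
    using arg_cong[OF m3, of int] by (simp add: zmod_int)
  have dP: "(int P) dvd int (VT 1 n x) - int (VT 1 n y)"
    apply (rule mod_eq_dvd_iff[THEN iffD1])
    using arg_cong[OF mP, of int] by (simp add: zmod_int)
  have pm: "\<And>i. i \<in> D \<Longrightarrow> int (x i) - int (y i) = 1 \<or> int (x i) - int (y i) = -1"
    using bin_pm[OF xb yb] by (simp add: D_def)
  show False
  proof (cases "card D = 1")
    case True
    then obtain i where D: "D = {i}" by (auto simp: card_Suc_eq)
    have "(3::int) dvd int (x i) - int (y i)" using d3 VT_diff[OF xb yb, of 0] D
      by (simp add: D_def)
    thus False using pm[of i] D by auto
  next
    case False
    hence "card D = 2" using c \<open>card D \<noteq> 0\<close> by (simp add: D_def)
    then obtain i j where D0: "D = {i, j}" "i \<noteq> j" by (auto simp: card_Suc_eq numeral_2_eq_2)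
    then obtain i j where D: "D = {i, j}" "i < j"
      by (metis insert_commute linorder_neqE_nat)
    have mx: "Max D = j" "Min D = i" using D by auto
    have jiP: "j - i < P" using md mx by (simp add: D_def)
    have e0: "(3::int) dvd (int (x i) - int (y i)) + (int (x j) - int (y j))"
      using d3 VT_diff[OF xb yb, of 0] D by (simp add: D_def)
    have e1: "int P dvd int i * (int (x i) - int (y i)) + int j * (int (x j) - int (y j))"
      using dP VT_diff[OF xb yb, of 1] D by (simp add: D_def)
    define di where "di = int (x i) - int (y i)"
    define dj where "dj = int (x j) - int (y j)"
    have pi: "di = 1 \<or> di = -1" and pj: "dj = 1 \<or> dj = -1"
      using pm[of i] pm[of j] D by (auto simp: di_def dj_def)
    have E0: "3 dvd di + dj" and E1: "int P dvd int i * di + int j * dj"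
      using e0 e1 by (simp_all add: di_def dj_def)
    have "int P dvd int j - int i \<or> int P dvd -(int j - int i)"
      using pi pj E0 E1 by (auto simp: algebra_simps)
    hence "int P dvd int j - int i" using dvd_minus_iff by fastforce
    moreover have "0 < int j - int i" "int j - int i < int P" using D jiP by auto
    ultimately show False using zdvd_imp_le by fastforce
  qed
qed

lemma card_binwords: "card (binwords n) = 2 ^ n"
  by (simp add: binwords_def card_PiE numeral_2_eq_2)

lemma fin_code: "finite (codeC n P b0 b1)"
proof -
  have "finite (binwords n)" by (simp add: binwords_def finite_PiE)
  thus ?thesis by (rule rev_finite_subset) (auto simp: codeC_def)
qed

lemma part2:
  assumes "P \<ge> 1"
  shows "\<exists>b0 b1. b0 \<le> 2 \<and> b1 \<le> P - 1 \<and> card (codeC n P b0 b1) > 0 \<and>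
              redundancy n (codeC n P b0 b1) \<le> log 2 (real P) + log 2 3"
proof -
  define S where "S = {..<(3::nat)} \<times> {..<P}"
  define f where "f = (\<lambda>p. card (codeC n P (fst p) (snd p)))"
  have finS: "finite S" "S \<noteq> {}" using assms by (auto simp: S_def lessThan_empty_iff)
  have cS: "card S = 3 * P" by (simp add: S_def)
  have cov: "binwords n \<subseteq> (\<Union>p\<in>S. codeC n P (fst p) (snd p))"
  proof
    fix x assume "x \<in> binwords n"
    moreover have "P > 0" using assms by simp
    ultimately show "x \<in> (\<Union>p\<in>S. codeC n P (fst p) (snd p))"
      by (auto simp: S_def codeC_def intro!: bexI[of _ "(VT 0 n x mod 3, VT 1 n x mod P)"])
  qed
  have "2 ^ n = card (binwords n)" by (simp add: card_binwords)
  also have "\<dots> \<le> card (\<Union>p\<in>S. codeC n P (fst p) (snd p))"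
    using cov by (intro card_mono) (auto simp: finS fin_code)
  also have "\<dots> \<le> sum f S" unfolding f_def by (rule card_UN_le[OF finS(1)])
  also have "\<dots> \<le> card S * Max (f ` S)"
    using sum_bounded_above[of S f "Max (f ` S)"] finS by simp
  finally have big: "2 ^ n \<le> 3 * P * Max (f ` S)" by (simp add: cS)
  have "Max (f ` S) \<in> f ` S" using finS by simp
  then obtain b0 b1 where bS: "(b0, b1) \<in> S" and fm: "f (b0, b1) = Max (f ` S)" by auto
  define c where "c = card (codeC n P b0 b1)"
  have big2: "2 ^ n \<le> 3 * P * c" using big fm by (simp add: c_def f_def)
  hence cpos: "c > 0" by (cases "c = 0") auto
  have "real (2 ^ n) \<le> real (3 * P * c)" using big2 by linarith
  hence "2 powr real n \<le> 3 * real P * real c" by (simp add: powr_realpow)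
  hence "log 2 (2 powr real n) \<le> log 2 (3 * real P * real c)"
    using cpos assms by (subst log_le_cancel_iff) auto
  hence "real n \<le> log 2 3 + log 2 (real P) + log 2 (real c)"
    using cpos assms by (simp add: log_mult)
  hence "redundancy n (codeC n P b0 b1) \<le> log 2 (real P) + log 2 3"
    by (simp add: redundancy_def c_def)
  moreover have "b0 \<le> 2" "b1 \<le> P - 1" using bS by (auto simp: S_def)
  ultimately show ?thesis using cpos unfolding c_def by blast
qed

theorem theorem8:
  fixes n P a0 a1 :: nat
  assumes "n \<ge> 1" and "P \<ge> 1" and "a0 \<le> 2" and "a1 \<le> P - 1"
  shows "(\<forall>x\<in>codeC n P a0 a1. \<forall>y\<in>codeC n P a0 a1.
            x \<noteq> y \<and> Max (diffpos n x y) - Min (diffpos n x y) < P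
            \<longrightarrow> hamming n x y \<ge> 3)
         \<and> (\<exists>b0 b1. b0 \<le> 2 \<and> b1 \<le> P - 1 \<and> card (codeC n P b0 b1) > 0 \<and>
              redundancy n (codeC n P b0 b1) \<le> log 2 (real P) + log 2 3)"
  using part1 part2[OF assms(2)] by blast

end
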